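(* Let $n\ge1$, $k\ge2$, and $\mathcal{K}=\{\kappa_0,\dots,\kappa_{k-1}\}$ a set of size $k$. For the uniform prior $\pi$ on $\mathcal{K}^n$ and the single-target gain function $g_{\rm T}$, $$V_{\rm T}[\pi\triangleright\mathbf{S}]=\frac{1}{k^n}\sum_{\substack{n_0,\dots,n_{k-1}\ge0\\ n_0+\dots+n_{k-1}=n}}\binom{n}{n_0,n_1,\dots,n_{k-1}}\frac{\max(n_0,\dots,n_{k-1})}{n}.$$
   Context: A dataset is $x=(x_0,\dots,x_{n-1})\in\mathcal{K}^n$; its histogram $h(x)$ is the map $\kappa\mapsto|\{i:x_i=\kappa\}|$; $\#z$ is the number of datasets with histogram $z$. Shuffle channel $\mathbf{S}:\mathcal{K}^n\to\mathcal{K}^n$: $\mathbf{S}_{x,y}=1/\#h(x)$ if $h(y)=h(x)$, else $0$. Uniform prior $\pi_x=1/k^n$. Single-target gain function: $\mathcal{W}=\mathcal{K}$, $g_{\rm T}(w,x)=1$ if $x_0=w$, else $0$. Posterior vulnerability: $V_{\rm T}[\pi\triangleright\mathbf{C}]=\sum_{y}\max_{w\in\mathcal{W}}\sum_{x}\pi_x\mathbf{C}_{x,y}g_{\rm T}(w,x)$. The sum in the claim ranges over all tuples of nonnegative integers summing to $n$, and $\binom{n}{n_0,\dots,n_{k-1}}$ is the multinomial coefficient. *)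

theory Defs
  imports Main "HOL.Real"
begin

definition datasets :: "'a set \<Rightarrow> nat \<Rightarrow> 'a list set" where
  "datasets K n = {xs. length xs = n \<and> set xs \<subseteq> K}"

definition hist :: "'a list \<Rightarrow> 'a \<Rightarrow> nat" where
  "hist xs = (\<lambda>\<kappa>. card {i. i < length xs \<and> xs ! i = \<kappa>})"

definition num_hist :: "'a set \<Rightarrow> nat \<Rightarrow> ('a \<Rightarrow> nat) \<Rightarrow> nat" where
  "num_hist K n z = card {x \<in> datasets K n. hist x = z}"

definition shuffle_ch :: "'a set \<Rightarrow> nat \<Rightarrow> 'a list \<Rightarrow> 'a list \<Rightarrow> real" where
  "shuffle_ch K n x y = (if hist y = hist x then 1 / real (num_hist K n (hist x)) else 0)"

definition uniform_prior :: "'a set \<Rightarrow> nat \<Rightarrow> 'a list \<Rightarrow> real" where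
  "uniform_prior K n x = 1 / real (card K) ^ n"

definition gain_T :: "'a \<Rightarrow> 'a list \<Rightarrow> real" where
  "gain_T w x = (if x ! 0 = w then 1 else 0)"

definition post_vuln ::
  "'x set \<Rightarrow> 'y set \<Rightarrow> 'w set \<Rightarrow> ('x \<Rightarrow> real) \<Rightarrow> ('x \<Rightarrow> 'y \<Rightarrow> real) \<Rightarrow> ('w \<Rightarrow> 'x \<Rightarrow> real) \<Rightarrow> real"
  where
  "post_vuln X Y W \<pi> C g = (\<Sum>y\<in>Y. Max ((\<lambda>w. \<Sum>x\<in>X. \<pi> x * C x y * g w x) ` W))"

definition multinomial :: "nat \<Rightarrow> nat \<Rightarrow> (nat \<Rightarrow> nat) \<Rightarrow> nat" where
  "multinomial n k m = fact n div (\<Prod>i<k. fact (m i))"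

definition compositions :: "nat \<Rightarrow> nat \<Rightarrow> (nat \<Rightarrow> nat) set" where
  "compositions k n = {m. (\<forall>i\<ge>k. m i = 0) \<and> (\<Sum>i<k. m i) = n}"

end

theory Submission
  imports Defs "HOL-Combinatorics.Multiset_Permutations"
begin

lemma hist_mset: "hist xs = count (mset xs)"
  by (auto simp: hist_def fun_eq_iff count_mset count_list_eq_length_filter
      length_filter_conv_card eq_commute)

lemma finite_datasets: "finite K \<Longrightarrow> finite (datasets K n)"
  unfolding datasets_def using finite_lists_length_eq[of K n] by (simp add: conj_commute)

lemma datasets_perm:
  assumes "y \<in> datasets K n"
  shows "{x \<in> datasets K n. mset x = mset y} = permutations_of_multiset (mset y)"
  using assms unfolding datasets_def permutations_of_multiset_def
  by (auto dest: mset_eq_setD mset_eq_length)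

lemma inner_sum:
  assumes y: "y \<in> datasets K n" and n: "n \<ge> 1" and fin: "finite K"
  shows "(\<Sum>x\<in>datasets K n. uniform_prior K n x * shuffle_ch K n x y * gain_T w x)
     = (1 / real (card K) ^ n) * real (count (mset y) w) / real n"
proof -
  define A where "A = mset y"
  define c where "c = 1 / real (card K) ^ n"
  define N where "N = card (permutations_of_multiset A)"
  have sA: "size A = n" using y by (simp add: A_def datasets_def)
  have NH: "num_hist K n (count (mset y)) = N"
    unfolding num_hist_def N_def A_def hist_mset[symmetric]
    unfolding hist_mset
    using datasets_perm[OF y] by (simp add: count_inject)
  have Npos: "N > 0" unfolding N_def
    by (simp add: card_gt_0_iff)
  have "(\<Sum>x\<in>datasets K n. uniform_prior K n x * shuffle_ch K n x y * gain_T w x)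
      = (\<Sum>x\<in>datasets K n. if mset x = A \<and> x ! 0 = w then c / N else 0)"
    apply (rule sum.cong[OF refl])
    by (auto simp: uniform_prior_def shuffle_ch_def gain_T_def hist_mset NH c_def A_def count_inject)
  also have "\<dots> = real (card {x \<in> datasets K n. mset x = A \<and> x ! 0 = w}) * (c / N)"
    using sum.inter_filter[OF finite_datasets[OF fin], symmetric, where g="\<lambda>_. c / real N" and P="\<lambda>x. mset x = A \<and> x ! 0 = w"]
    by simp
  also have "{x \<in> datasets K n. mset x = A \<and> x ! 0 = w} = {x \<in> permutations_of_multiset A. x ! 0 = w}"
    using datasets_perm[OF y] unfolding A_def by blast
  also have "real (card \<dots>) = real N * real (count A w) / real n"
  proof (cases "w \<in># A")
    case True
    have "{x \<in> permutations_of_multiset A. x ! 0 = w} = (#) w ` permutations_of_multiset (A - {#w#})"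
    proof safe
      fix x assume x: "x \<in> permutations_of_multiset A" "w = x ! 0"
      then have "x \<noteq> []" using sA n length_finite_permutations_of_multiset[OF x(1)] by auto
      then obtain z zs where "x = z # zs" by (cases x) auto
      then show "x \<in> (#) (x ! 0) ` permutations_of_multiset (A - {#x ! 0#})"
        using x permutations_of_multiset_Cons_iff[of z zs A] by auto
    next
      fix zs assume "zs \<in> permutations_of_multiset (A - {#w#})"
      then show "w # zs \<in> permutations_of_multiset A"
        using True permutations_of_multiset_Cons_iff[of w zs A] by blast
    qed simp
    then have "card {x \<in> permutations_of_multiset A. x ! 0 = w} = card (permutations_of_multiset (A - {#w#}))"
      by (simp add: card_image)
    moreover have "N * count A w = n * card (permutations_of_multiset (A - {#w#}))"
      using card_permutations_of_multiset_remove_aux[OF True] sA N_def by simp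
    ultimately show ?thesis using n
      by (metis (no_types, lifting) nonzero_mult_div_cancel_left of_nat_0_less_iff of_nat_mult
          less_le_trans zero_less_one order.strict_iff_not)
  next
    case False
    have "{x \<in> permutations_of_multiset A. x ! 0 = w} = {}"
    proof safe
      fix x assume x: "x \<in> permutations_of_multiset A" "w = x ! 0"
      then have "length x = n" using sA length_finite_permutations_of_multiset[OF x(1)] by auto
      then have "x ! 0 \<in> set x" using n by auto
      then show "x \<in> {}" using x False permutations_of_multisetD[OF x(1)] by auto
    qed
    moreover have "count A w = 0" using False by (simp add: count_eq_zero_iff)
    ultimately show ?thesis by (metis card.empty mult_zero_right of_nat_0 div_0 divide_eq_0_iff)
  qed
  finally show ?thesis using Npos by (simp add: c_def A_def)
qed

lemma sum_K:
  assumes e: "bij_betw e {..<k} K" and fin: "finite K" and A: "set_mset A \<subseteq> K"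
  shows "size A = (\<Sum>i<k. count A (e i))"
proof -
  have "size A = (\<Sum>x\<in>set_mset A. count A x)" by (rule size_multiset_overloaded_eq)
  also have "\<dots> = (\<Sum>x\<in>K. count A x)"
    by (rule sum.mono_neutral_left[OF fin A]) (auto simp: count_eq_zero_iff)
  also have "\<dots> = (\<Sum>i<k. count A (e i))"
    using sum.reindex_bij_betw[OF e, of "count A"] by simp
  finally show ?thesis .
qed

lemma prod_K:
  assumes e: "bij_betw e {..<k} K" and fin: "finite K" and A: "set_mset A \<subseteq> K"
  shows "(\<Prod>x\<in>set_mset A. fact (count A x)) = (\<Prod>i<k. fact (count A (e i)) :: nat)"
proof -
  have "(\<Prod>x\<in>set_mset A. fact (count A x)) = (\<Prod>x\<in>K. fact (count A x) :: nat)"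
    by (rule prod.mono_neutral_left[OF fin A]) (auto simp: not_in_iff)
  also have "\<dots> = (\<Prod>i<k. fact (count A (e i)))"
    using prod.reindex_bij_betw[OF e, of "\<lambda>x. fact (count A x) :: nat"] by simp
  finally show ?thesis .
qed

theorem mainTheorem13:
  fixes K :: "'a set" and n k :: nat
  assumes "n \<ge> 1" and "k \<ge> 2" and "finite K" and "card K = k"
  shows "post_vuln (datasets K n) (datasets K n) K (uniform_prior K n) (shuffle_ch K n) gain_T
     = (1 / real k ^ n) * (\<Sum>m\<in>compositions k n.
          real (multinomial n k m) * real (Max (m ` {..<k})) / real n)"
proof -
  note n = assms(1) and fin = assms(3) and cK = assms(4)
  obtain e where e: "bij_betw e {..<k} K"
    using ex_bij_betw_nat_finite[OF fin] cK by (auto simp: lessThan_atLeast0)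
  have eK: "e ` {..<k} = K" using e by (simp add: bij_betw_def)
  have einj: "inj_on e {..<k}" using e by (simp add: bij_betw_def)
  have Kne: "K \<noteq> {}" using cK assms(2) by auto
  define D where "D = datasets K n"
  define c where "c = 1 / real k ^ n"
  define \<phi> where "\<phi> y = (\<lambda>i. if i < k then count (mset y) (e i) else 0)" for y :: "'a list"
  define G where "G m = c * real (Max (m ` {..<k})) / real n" for m :: "nat \<Rightarrow> nat"
  have finD: "finite D" using finite_datasets[OF fin] by (simp add: D_def)
  have c0: "c \<ge> 0" by (simp add: c_def)
  have step1: "Max ((\<lambda>w. \<Sum>x\<in>D. uniform_prior K n x * shuffle_ch K n x y * gain_T w x) ` K) = G (\<phi> y)"
    if y: "y \<in> D" for y
  proof -
    have "(\<lambda>w. \<Sum>x\<in>D. uniform_prior K n x * shuffle_ch K n x y * gain_T w x) ` K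
        = (\<lambda>v. c * real v / real n) ` (count (mset y) ` K)"
      using inner_sum[OF y[unfolded D_def] n fin] cK by (auto simp: D_def c_def image_image)
    also have "Max \<dots> = c * real (Max (count (mset y) ` K)) / real n"
      by (rule mono_Max_commute[symmetric]) (use c0 Kne fin in \<open>auto simp: mono_def divide_right_mono mult_left_mono\<close>)
    also have "count (mset y) ` K = \<phi> y ` {..<k}"
      unfolding \<phi>_def eK[symmetric] by auto
    finally show ?thesis by (simp add: G_def)
  qed
  have "post_vuln D D K (uniform_prior K n) (shuffle_ch K n) gain_T = (\<Sum>y\<in>D. G (\<phi> y))"
    unfolding post_vuln_def using step1 by (simp add: D_def)
  also have "\<dots> = (\<Sum>m\<in>\<phi> ` D. \<Sum>y\<in>{y \<in> D. \<phi> y = m}. G (\<phi> y))"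
    by (rule sum.image_gen[OF finD])
  also have "\<dots> = (\<Sum>m\<in>\<phi> ` D. real (card {y \<in> D. \<phi> y = m}) * G m)"
    by (rule sum.cong[OF refl]) simp
  finally have L: "post_vuln D D K (uniform_prior K n) (shuffle_ch K n) gain_T
     = (\<Sum>m\<in>\<phi> ` D. real (card {y \<in> D. \<phi> y = m}) * G m)" .
  define AA where "AA m = (\<Sum>i<k. replicate_mset (m i) (e i))" for m :: "nat \<Rightarrow> nat"
  have cA: "count (AA m) (e j) = m j" if "j < k" for m j
  proof -
    have "count (AA m) (e j) = (\<Sum>i<k. if e j = e i then m i else 0)"
      by (simp add: AA_def count_sum)
    also have "\<dots> = (\<Sum>i<k. if i = j then m i else 0)"
      by (rule sum.cong[OF refl]) (use einj that in \<open>auto simp: inj_on_eq_iff\<close>)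
    also have "\<dots> = m j" using that by simp
    finally show ?thesis .
  qed
  have cA0: "count (AA m) x = 0" if "x \<notin> K" for m x
    using that eK by (auto simp: AA_def count_sum)
  have setA: "set_mset (AA m) \<subseteq> K" for m
    using cA0 by (meson count_eq_zero_iff subsetI)
  have eqA: "mset y = AA m \<longleftrightarrow> (\<forall>i<k. count (mset y) (e i) = m i)"
    if "set y \<subseteq> K" for y m
  proof
    assume "mset y = AA m" then show "\<forall>i<k. count (mset y) (e i) = m i" using cA by simp
  next
    assume H: "\<forall>i<k. count (mset y) (e i) = m i"
    show "mset y = AA m"
    proof (rule multiset_eqI)
      fix x show "count (mset y) x = count (AA m) x"
      proof (cases "x \<in> K")
        case True
        then obtain j where "j < k" "x = e j" using eK by auto
        then show ?thesis using H cA by simp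
      next
        case False
        then have "x \<notin> set y" using that by auto
        then show ?thesis using cA0[OF False] by (simp add: count_mset count_list_0_iff)
      qed
    qed
  qed
  have phiC: "\<phi> y \<in> compositions k n" if "y \<in> D" for y
  proof -
    have "set y \<subseteq> K" "length y = n" using that by (auto simp: D_def datasets_def)
    then have "size (mset y) = (\<Sum>i<k. count (mset y) (e i))"
      using sum_K[OF e fin, of "mset y"] by simp
    then show ?thesis using \<open>length y = n\<close> by (simp add: compositions_def \<phi>_def)
  qed
  have char: "(y \<in> D \<and> \<phi> y = m) \<longleftrightarrow> mset y = AA m" if m: "m \<in> compositions k n" for y m
  proof
    assume H: "y \<in> D \<and> \<phi> y = m"
    then have "set y \<subseteq> K" by (simp add: D_def datasets_def)
    then show "mset y = AA m" using eqA H by (auto simp: \<phi>_def)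
  next
    assume H: "mset y = AA m"
    have sy: "set y \<subseteq> K" using setA[of m] H by (metis set_mset_mset)
    have "length y = size (AA m)" using H by (metis size_mset)
    also have "\<dots> = (\<Sum>i<k. count (AA m) (e i))" by (rule sum_K[OF e fin setA])
    also have "\<dots> = n" using m cA by (simp add: compositions_def)
    finally have "y \<in> D" using sy by (simp add: D_def datasets_def)
    moreover have "\<phi> y = m" using H cA m by (auto simp: \<phi>_def compositions_def fun_eq_iff)
    ultimately show "y \<in> D \<and> \<phi> y = m" by blast
  qed
  have imgD: "\<phi> ` D = compositions k n"
  proof
    show "\<phi> ` D \<subseteq> compositions k n" using phiC by auto
  next
    show "compositions k n \<subseteq> \<phi> ` D"
    proof
      fix m assume m: "m \<in> compositions k n"
      obtain y where "mset y = AA m" using ex_mset by blast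
      then show "m \<in> \<phi> ` D" using char[OF m] by (metis image_eqI)
    qed
  qed
  have cardm: "card {y \<in> D. \<phi> y = m} = multinomial n k m" if m: "m \<in> compositions k n" for m
  proof -
    have "{y \<in> D. \<phi> y = m} = permutations_of_multiset (AA m)"
      using char[OF m] by (auto simp: permutations_of_multiset_def)
    moreover have "size (AA m) = n"
      using sum_K[OF e fin setA, of m] m cA by (simp add: compositions_def)
    moreover have "(\<Prod>x\<in>set_mset (AA m). fact (count (AA m) x)) = (\<Prod>i<k. fact (m i) :: nat)"
      using prod_K[OF e fin setA, of m] cA by simp
    ultimately show ?thesis
      by (simp add: card_permutations_of_multiset(1) multinomial_def)
  qed
  have "(1 / real k ^ n) * (\<Sum>m\<in>compositions k n.
          real (multinomial n k m) * real (Max (m ` {..<k})) / real n)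
      = (\<Sum>m\<in>compositions k n. real (card {y \<in> D. \<phi> y = m}) * G m)"
    unfolding sum_distrib_left
    by (rule sum.cong[OF refl]) (simp add: cardm G_def c_def)
  then show ?thesis using L imgD by (simp add: D_def)
qed

end
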